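(* Let $\epsilon > 0$ and $N \geq 1$ be real numbers. Let $\alpha$ be a real number and suppose there are integers $a$ and $q$ with $1 \leq q \leq N^{4/3}$, $\gcd(a,q) = 1$, and $\left|\alpha - \frac{a}{q}\right| \leq \frac{1}{q N^{4/3}}$. Then there exist integers $a_1, a_2$ and integers $1 \leq q_1, q_2 \leq N$ such that $$\left|\alpha - \frac{a_1}{q_1} - \frac{a_2}{q_2}\right| \leq \frac{C_\epsilon}{q N^{4/3 - \epsilon}},$$ where $C_\epsilon>0$ is a constant depending only on $\epsilon$. *)

theory Defs
  imports Complex_Main
begin

end

theory Submission
  imports Defs "HOL-Computational_Algebra.Primes" "HOL-Real_Asymp.Real_Asymp" "HOL-Analysis.Kronecker_Approximation_Theorem"
begin

lemma mult_le_self: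
  assumes "prime (p::nat)" "m > 0"
  shows "multiplicity p m \<le> m"
proof -
  have "p ^ multiplicity p m dvd m" by (rule multiplicity_dvd)
  hence "p ^ multiplicity p m \<le> m" using assms by (intro dvd_imp_le) auto
  moreover have "multiplicity p m < 2 ^ multiplicity p m" by (rule less_exp)
  moreover have "2 ^ multiplicity p m \<le> p ^ multiplicity p m"
    using assms prime_ge_2_nat by (intro power_mono) auto
  ultimately show ?thesis by linarith
qed

lemma legendre:
  assumes p: "prime (p::nat)"
  shows "n \<le> K \<Longrightarrow> multiplicity p (fact n :: nat) = (\<Sum>i\<in>{1..K}. n div p^i)"
proof (induction n)
  case 0
  then show ?case using p by simp
next
  case (Suc n)
  define v where "v = multiplicity p (Suc n)"
  have vle: "v \<le> K" using mult_le_self[OF p, of "Suc n"] Suc.prems unfolding v_def by simp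
  have "fact (Suc n) = Suc n * (fact n :: nat)" by simp
  hence "multiplicity p (fact (Suc n) :: nat) = v + multiplicity p (fact n :: nat)"
    unfolding v_def using p
    by (simp add: prime_elem_multiplicity_mult_distrib prime_imp_prime_elem del: fact_Suc mult_Suc)
  also have "multiplicity p (fact n :: nat) = (\<Sum>i\<in>{1..K}. n div p^i)"
    using Suc by simp
  also have "v = (\<Sum>i\<in>{1..K}. if i \<le> v then 1 else 0)"
  proof -
    have "(\<Sum>i\<in>{1..K}. if i \<le> v then 1 else (0::nat)) = card {i\<in>{1..K}. i \<le> v}"
      by (simp add: sum.If_cases Int_def)
    also have "{i\<in>{1..K}. i \<le> v} = {1..v}" using vle by auto
    finally show ?thesis by simp
  qed
  also have "(\<Sum>i\<in>{1..K}. if i \<le> v then 1 else 0) + (\<Sum>i\<in>{1..K}. n div p^i)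
      = (\<Sum>i\<in>{1..K}. Suc n div p^i)"
    unfolding sum.distrib[symmetric]
  proof (intro sum.cong refl)
    fix i assume "i \<in> {1..K}"
    have "p ^ i dvd Suc n \<longleftrightarrow> i \<le> v" unfolding v_def by (rule power_dvd_iff_le_multiplicity) (use p in auto)
    moreover have "p ^ i > 0" using p prime_gt_0_nat by simp
    ultimately show "(if i \<le> v then 1 else 0) + n div p ^ i = Suc n div p ^ i"
      by (auto simp: div_Suc dvd_eq_mod_eq_0)
  qed
  finally show ?case .
qed

lemma mult_central_binom:
  assumes p: "prime (p::nat)" and n: "n > 0"
  shows "p ^ multiplicity p ((2*n) choose n) \<le> 2*n"
proof -
  define K where "K = 2*n"
  define A where "A = {i\<in>{1..K}. p^i \<le> 2*n}"
  have "fact n * fact (2*n - n) * ((2*n) choose n) = (fact (2*n) :: nat)"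
    by (rule binomial_fact_lemma) simp
  hence eq: "fact n * fact n * ((2*n) choose n) = (fact (2*n) :: nat)" by simp
  have nz: "((2*n) choose n) \<noteq> 0" by simp
  have "multiplicity p (fact (2*n) :: nat) = multiplicity p (fact n :: nat) + multiplicity p (fact n :: nat)
        + multiplicity p ((2*n) choose n)"
    unfolding eq[symmetric] using p nz
    by (simp add: prime_elem_multiplicity_mult_distrib)
  hence "multiplicity p ((2*n) choose n) + 2 * (\<Sum>i\<in>{1..K}. n div p^i) = (\<Sum>i\<in>{1..K}. (2*n) div p^i)"
    using legendre[OF p, of n K] legendre[OF p, of "2*n" K] unfolding K_def by simp
  also have "\<dots> \<le> (\<Sum>i\<in>{1..K}. 2 * (n div p^i) + (if p^i \<le> 2*n then 1 else 0))"
  proof (intro sum_mono)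
    fix i assume "i \<in> {1..K}"
    have pos: "p^i > 0" using p prime_gt_0_nat by simp
    show "2 * n div p ^ i \<le> 2 * (n div p ^ i) + (if p ^ i \<le> 2 * n then 1 else 0)"
    proof (cases "p^i \<le> 2*n")
      case True
      have "2 * n div p ^ i \<le> 2 * (n div p ^ i) + 1"
      proof -
        have "n mod p^i < p^i" using pos by simp
        moreover have "n = p^i * (n div p^i) + n mod p^i" by simp
        ultimately have "2*n < 2*(p^i * (n div p^i)) + 2 * p^i" by linarith
        hence "2*n < p^i * (2*(n div p^i) + 2)" by (simp add: algebra_simps)
        hence "2*n div p^i < 2*(n div p^i) + 2" using pos
          by (simp add: div_less_iff_less_mult mult.commute)
        thus ?thesis by simp
      qed
      then show ?thesis using True by simp
    next
      case False
      then show ?thesis by simp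
    qed
  qed
  also have "\<dots> = 2 * (\<Sum>i\<in>{1..K}. n div p^i) + card A"
    by (simp add: sum.distrib sum_distrib_left sum.If_cases A_def Int_def)
  finally have vle: "multiplicity p ((2*n) choose n) \<le> card A" by simp
  have "p ^ card A \<le> 2*n"
  proof (cases "A = {}")
    case True then show ?thesis using n by simp
  next
    case False
    have fin: "finite A" unfolding A_def by simp
    define j where "j = Max A"
    have "j \<in> A" using Max_in[OF fin False] unfolding j_def .
    hence pj: "p^j \<le> 2*n" unfolding A_def by simp
    have "A \<subseteq> {1..j}" using Max_ge[OF fin] unfolding j_def A_def by auto
    hence "card A \<le> j" using card_mono[of "{1..j}" A] by simp
    hence "p ^ card A \<le> p ^ j" using p prime_gt_0_nat[OF p] by (intro power_increasing) auto
    thus ?thesis using pj by simp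
  qed
  moreover have "p ^ multiplicity p ((2*n) choose n) \<le> p ^ card A"
    using vle prime_gt_0_nat[OF p] by (intro power_increasing) auto
  ultimately show ?thesis by simp
qed

lemma central_binom_upper:
  assumes n: "n > 0"
  shows "((2*n) choose n) \<le> (2*n) ^ card {p. prime p \<and> p \<le> 2*n}"
proof -
  let ?C = "(2*n) choose n"
  have "?C = (\<Prod>p \<in> prime_factors ?C. p ^ multiplicity p ?C)"
    by (rule prime_factorization_nat) simp
  also have "\<dots> \<le> (\<Prod>p \<in> prime_factors ?C. 2*n)"
    by (intro prod_mono) (auto intro: mult_central_binom n)
  also have "\<dots> = (2*n) ^ card (prime_factors ?C)" by simp
  also have "\<dots> \<le> (2*n) ^ card {p. prime p \<and> p \<le> 2*n}"
  proof (intro power_increasing card_mono)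
    show "prime_factors ?C \<subseteq> {p. prime p \<and> p \<le> 2*n}"
    proof
      fix p assume "p \<in> prime_factors ?C"
      hence pr: "prime p" and d: "p dvd ?C" by (auto simp: in_prime_factors_iff)
      have "?C dvd fact (2*n)" using binomial_fact_lemma[of n "2*n"]
        by (metis dvd_triv_right le_add2 mult_2)
      hence "p dvd fact (2*n)" using d dvd_trans by blast
      thus "p \<in> {p. prime p \<and> p \<le> 2*n}" using pr prime_dvd_fact_iff[OF pr] by auto
    qed
  qed (use n in auto)
  finally show ?thesis .
qed

lemma ev: "eventually (\<lambda>N::real. (N-2)/2*ln 4/ln N - 1 - (N powr (11/12) + 2) > (N powr (5/12)+1)*(2*N powr (5/12)+1)) at_top"
  by real_asymp

lemma count_small_residues:
  fixes q a :: int and X :: nat and R :: real and S :: "nat set"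
  assumes q: "q > 0" and R: "R \<ge> 0" and cop: "coprime a q" and SX: "S \<subseteq> {1..X}"
    and res: "\<forall>n\<in>S. \<exists>h::int. \<bar>of_int (a * int n - h*q)\<bar> < R"
  shows "real (card S) \<le> (real X / of_int q + 1) * (2*R + 1)"
proof (cases "S = {}")
  case True
  have "0 \<le> 2*R + 1" using R by simp
  moreover have "0 \<le> real X / of_int q + 1" using q by simp
  ultimately show ?thesis using True by simp
next
  case False
  then obtain n0 where "n0 \<in> S" by auto
  then obtain h0 where "\<bar>of_int (a * int n0 - h0*q)\<bar> < R" using res by auto
  hence R0: "R > 0" by linarith
  define t where "t n = (SOME t::int. \<bar>of_int t\<bar> < R \<and> q dvd (a * int n - t))" for n
  have t: "\<bar>of_int (t n)\<bar> < R \<and> q dvd (a * int n - t n)" if "n \<in> S" for n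
  proof -
    obtain h where h: "\<bar>of_int (a * int n - h*q)\<bar> < R" using res \<open>n \<in> S\<close> by auto
    have "\<exists>t::int. \<bar>of_int t\<bar> < R \<and> q dvd (a * int n - t)"
      by (rule exI[of _ "a * int n - h*q"]) (use h in auto)
    thus ?thesis unfolding t_def by (rule someI_ex)
  qed
  define K where "K = \<lfloor>R\<rfloor>"
  define f where "f n = (int n div q, t n)" for n
  have inj: "inj_on f S"
  proof
    fix n n' assume nS: "n \<in> S" and n'S: "n' \<in> S" and eq: "f n = f n'"
    have d1: "int n div q = int n' div q" and d2: "t n = t n'" using eq unfolding f_def by auto
    have "q dvd (a * int n - t n) - (a * int n' - t n')" using t[OF nS] t[OF n'S] by auto
    hence "q dvd a * (int n - int n')" using d2 by (simp add: algebra_simps)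
    hence dv: "q dvd (int n - int n')" using cop
      by (metis coprime_commute coprime_dvd_mult_right_iff)
    have "int n = q * (int n div q) + int n mod q" by simp
    moreover have "int n' = q * (int n' div q) + int n' mod q" by simp
    moreover have "0 \<le> int n mod q" "int n mod q < q" "0 \<le> int n' mod q" "int n' mod q < q"
      using q by auto
    moreover have "q * (int n div q) = q * (int n' div q)" using d1 by simp
    ultimately have "\<bar>int n - int n'\<bar> < q" by linarith
    have "int n - int n' = 0"
    proof (rule ccontr)
      assume ne: "int n - int n' \<noteq> 0"
      have "\<bar>q\<bar> \<le> \<bar>int n - int n'\<bar>" by (rule dvd_imp_le_int[OF ne dv])
      thus False using \<open>\<bar>int n - int n'\<bar> < q\<close> q by simp
    qed
    thus "n = n'" by simp
  qed
  have sub: "f ` S \<subseteq> {0..int X div q} \<times> {-K..K}"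
  proof
    fix x assume "x \<in> f ` S"
    then obtain n where nS: "n \<in> S" and x: "x = f n" by auto
    have "int n \<le> int X" using SX nS by auto
    hence "int n div q \<le> int X div q" using q by (simp add: zdiv_mono1)
    moreover have "0 \<le> int n div q" using q by (simp add: pos_imp_zdiv_nonneg_iff)
    moreover have "\<bar>t n\<bar> \<le> K" using t[OF nS] unfolding K_def by (simp add: le_floor_iff)
    ultimately show "x \<in> {0..int X div q} \<times> {-K..K}" unfolding x f_def by auto
  qed
  have "card S = card (f ` S)" using inj by (simp add: card_image)
  also have "\<dots> \<le> card ({0..int X div q} \<times> {-K..K})"
    by (intro card_mono sub) auto
  also have "\<dots> = nat (int X div q + 1) * nat (2*K + 1)" by (simp add: card_cartesian_product)
  finally have c: "real (card S) \<le> real (nat (int X div q + 1) * nat (2*K + 1))" by linarith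
  have K0: "K \<ge> 0" using R0 unfolding K_def by simp
  have "real (nat (int X div q + 1)) = of_int (int X div q) + 1" using q by (simp add: pos_imp_zdiv_nonneg_iff)
  also have "\<dots> \<le> real X / of_int q + 1"
  proof -
    have "of_int (int X div q) = of_int \<lfloor>of_int (int X) / (of_int q :: real)\<rfloor>"
      using floor_divide_of_int_eq[of "int X" q, where 'a=real] by simp
    also have "\<dots> \<le> of_int (int X) / (of_int q :: real)" by (rule of_int_floor_le)
    finally show ?thesis by simp
  qed
  finally have 1: "real (nat (int X div q + 1)) \<le> real X / of_int q + 1" .
  have 2: "real (nat (2*K + 1)) \<le> 2*R + 1" using K0 unfolding K_def by simp
  have "real (nat (int X div q + 1) * nat (2*K + 1)) = real (nat (int X div q + 1)) * real (nat (2*K + 1))" by simp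
  also have "\<dots> \<le> (real X / of_int q + 1) * (2*R + 1)"
  proof (intro mult_mono 1 2)
    show "0 \<le> real X / of_int q + 1" using q by (simp add: add_nonneg_nonneg)
  qed auto
  finally show ?thesis using c by linarith
qed

lemma pi_lower:
  fixes N :: real
  assumes N: "N \<ge> 4"
  shows "(N-2)/2 * ln 4 / ln N - 1 \<le> real (card {p. prime p \<and> p \<le> nat \<lfloor>N\<rfloor>})"
proof -
  define Nn where "Nn = nat \<lfloor>N\<rfloor>"
  define m where "m = Nn div 2"
  have NnN: "real Nn \<le> N" and NnN2: "real Nn > N - 1" using N unfolding Nn_def by linarith+
  have m2: "2*m \<le> Nn" "Nn \<le> 2*m + 1" unfolding m_def by auto
  have mlow: "2 * real m \<ge> N - 2" using m2 NnN2 by linarith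
  have mpos: "m > 0" using mlow N by (cases m) auto
  have mN: "2 * real m \<le> N" using m2 NnN by linarith
  define pi where "pi = card {p. prime p \<and> p \<le> 2*m}"
  have "pi \<le> card {p. prime p \<and> p \<le> Nn}" unfolding pi_def
    by (intro card_mono) (use m2 in auto)
  have "4^m / (2*real m) \<le> real ((2*m) choose m)" by (rule central_binomial_lower_bound[OF mpos])
  also have "\<dots> \<le> real ((2*m) ^ pi)" unfolding pi_def by (subst of_nat_le_iff) (rule central_binom_upper[OF mpos])
  finally have ineq: "4^m / (2*real m) \<le> (2*real m) ^ pi" by simp
  have pos2m: "2 * real m > 0" using mpos by simp
  have "ln (4^m / (2*real m)) \<le> ln ((2*real m) ^ pi)"
    using ineq pos2m by (subst ln_le_cancel_iff) auto
  moreover have "ln ((2*real m) ^ pi) = real pi * ln (2*real m)" by (rule ln_realpow)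
  moreover have "ln (4^m / (2*real m)) = real m * ln 4 - ln (2*real m)"
    using pos2m by (simp add: ln_div ln_realpow)
  ultimately have "real m * ln 4 - ln (2*real m) \<le> real pi * ln (2 * real m)" by simp
  moreover have l2: "ln (2*real m) > 0" using mpos by simp
  ultimately have "real m * ln 4 / ln (2*real m) - 1 \<le> real pi"
    by (simp add: field_simps)
  moreover have "real m * ln 4 / ln N \<le> real m * ln 4 / ln (2*real m)"
    using l2 mN pos2m by (intro divide_left_mono mult_nonneg_nonneg) auto
  moreover have "(N-2)/2 * ln 4 / ln N \<le> real m * ln 4 / ln N"
    using mlow N by (intro divide_right_mono mult_right_mono) auto
  ultimately have "(N-2)/2 * ln 4 / ln N - 1 \<le> real pi" by linarith
  thus ?thesis using \<open>pi \<le> _\<close> unfolding Nn_def by linarith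
qed

theorem corollary1:
  fixes \<epsilon> :: real
  assumes "\<epsilon> > 0"
  shows "\<exists>C>0. \<forall>(N::real) (\<alpha>::real) (a::int) (q::int).
           N \<ge> 1 \<and> 1 \<le> q \<and> real_of_int q \<le> N powr (4/3) \<and> gcd a q = 1 \<and>
           \<bar>\<alpha> - real_of_int a / real_of_int q\<bar> \<le> 1 / (real_of_int q * N powr (4/3))
           \<longrightarrow> (\<exists>(a1::int) (a2::int) (q1::int) (q2::int).
                 1 \<le> q1 \<and> real_of_int q1 \<le> N \<and> 1 \<le> q2 \<and> real_of_int q2 \<le> N \<and>
                 \<bar>\<alpha> - real_of_int a1 / real_of_int q1 - real_of_int a2 / real_of_int q2\<bar>
                   \<le> C / (real_of_int q * N powr (4/3 - \<epsilon>)))"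
proof -
  obtain N0 :: real where N0: "\<And>N::real. N \<ge> N0 \<Longrightarrow> (N-2)/2*ln 4/ln N - 1 - (N powr (11/12) + 2) > (N powr (5/12)+1)*(2*N powr (5/12)+1)"
    using ev unfolding eventually_at_top_linorder by blast
  define N1 where "N1 = max N0 4"
  define C where "C = max 2 (N1 powr 3)"
  show ?thesis
  proof (intro exI[of _ C] conjI allI impI)
    show "C > 0" unfolding C_def by simp
    fix N \<alpha> :: real and a q :: int
    assume H: "N \<ge> 1 \<and> 1 \<le> q \<and> real_of_int q \<le> N powr (4/3) \<and> gcd a q = 1 \<and>
           \<bar>\<alpha> - real_of_int a / real_of_int q\<bar> \<le> 1 / (real_of_int q * N powr (4/3))"
    hence N1': "N \<ge> 1" and q1: "1 \<le> q" and qN: "real_of_int q \<le> N powr (4/3)"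
      and cop: "gcd a q = 1" and app: "\<bar>\<alpha> - real_of_int a / real_of_int q\<bar> \<le> 1 / (real_of_int q * N powr (4/3))"
      by auto
    have qpos: "real_of_int q > 0" using q1 by simp
    have Npos: "N > 0" using N1' by simp
    have Dpos: "real_of_int q * N powr (4/3 - \<epsilon>) > 0" using qpos Npos by simp
    have Dle: "real_of_int q * N powr (4/3 - \<epsilon>) \<le> real_of_int q * N powr (4/3)"
      using qpos N1' assms by (intro mult_left_mono powr_mono) auto
    show "\<exists>(a1::int) (a2::int) (q1::int) (q2::int).
                 1 \<le> q1 \<and> real_of_int q1 \<le> N \<and> 1 \<le> q2 \<and> real_of_int q2 \<le> N \<and>
                 \<bar>\<alpha> - real_of_int a1 / real_of_int q1 - real_of_int a2 / real_of_int q2\<bar>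
                   \<le> C / (real_of_int q * N powr (4/3 - \<epsilon>))"
    proof (cases "N < N1")
      case True
      define a1 where "a1 = \<lfloor>\<alpha> + 1/2\<rfloor>"
      have e1: "\<bar>\<alpha> - real_of_int a1\<bar> \<le> 1/2" unfolding a1_def by linarith
      have "real_of_int q * N powr (4/3 - \<epsilon>) \<le> N powr (4/3) * N powr (4/3)"
        using Dle qN by (meson mult_right_mono order_trans powr_ge_zero)
      also have "\<dots> = N powr (8/3)" by (simp add: powr_add[symmetric])
      also have "\<dots> \<le> N powr 3" using N1' by (intro powr_mono) auto
      also have "\<dots> \<le> N1 powr 3" using True Npos by (intro powr_mono2) auto
      also have "\<dots> \<le> C" unfolding C_def by simp
      finally have "1 \<le> C / (real_of_int q * N powr (4/3 - \<epsilon>))" using Dpos by simp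
      hence "\<bar>\<alpha> - real_of_int a1 / 1 - real_of_int 0 / 1\<bar> \<le> C / (real_of_int q * N powr (4/3 - \<epsilon>))"
        using e1 by simp
      thus ?thesis using N1' by (intro exI[of _ a1] exI[of _ 0] exI[of _ 1]) auto
    next
      case False
      hence NN0: "N \<ge> N0" and N4: "N \<ge> 4" unfolding N1_def by auto
      define Nn where "Nn = nat \<lfloor>N\<rfloor>"
      define Y where "Y = nat \<lceil>N powr (11/12)\<rceil>"
      have Ylow: "real Y \<ge> N powr (11/12)" unfolding Y_def by linarith
      have h0: "N powr (11/12) \<ge> 0" by simp
      have cpos: "\<lceil>N powr (11/12)\<rceil> \<ge> 0" using ceiling_mono[OF h0] by simp
      have Yeq: "real Y = of_int \<lceil>N powr (11/12)\<rceil>" unfolding Y_def using cpos by simp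
      have Yhigh: "real Y \<le> N powr (11/12) + 1" unfolding Yeq by linarith
      have "N powr (11/12) > 0" using Npos by simp
      hence "real Y > 0" using Ylow by linarith
      hence Ypos: "Y > 0" by simp
      have Ypos': "real Y > 0" using Ypos by simp
      define P where "P = {p. prime p \<and> Y < p \<and> p \<le> Nn}"
      define \<theta> where "\<theta> p = real_of_int a * real p / real_of_int q" for p :: nat
      have ex: "\<exists>p\<in>P. \<exists>k h. 0 < k \<and> k \<le> int Y \<and> \<bar>of_int k * \<theta> p - of_int h\<bar> < 1 / real Y
                   \<and> real p * real_of_int k * real Y \<ge> real_of_int q * N powr (4/3)"
      proof (rule ccontr)
        assume nex: "\<not> ?thesis"
        have "\<forall>p\<in>P. \<exists>kh. 0 < fst kh \<and> fst kh \<le> int Y \<and> \<bar>of_int (fst kh) * \<theta> p - of_int (snd kh)\<bar> < 1 / real Y"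
        proof
          fix p assume "p \<in> P"
          obtain h k where "0 < k" "k \<le> int Y" "\<bar>of_int k * \<theta> p - of_int h\<bar> < 1 / real Y"
            using Dirichlet_approx[OF Ypos] by blast
          thus "\<exists>kh. 0 < fst kh \<and> fst kh \<le> int Y \<and> \<bar>of_int (fst kh) * \<theta> p - of_int (snd kh)\<bar> < 1 / real Y"
            by (intro exI[of _ "(k,h)"]) auto
        qed
        then obtain kh where kh: "\<And>p. p \<in> P \<Longrightarrow> 0 < fst (kh p) \<and> fst (kh p) \<le> int Y \<and>
              \<bar>of_int (fst (kh p)) * \<theta> p - of_int (snd (kh p))\<bar> < 1 / real Y"
          by metis
        define kf where "kf p = fst (kh p)" for p
        define hf where "hf p = snd (kh p)" for p
        have khf: "0 < kf p" "kf p \<le> int Y" "\<bar>of_int (kf p) * \<theta> p - of_int (hf p)\<bar> < 1 / real Y"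
          if "p \<in> P" for p using kh[OF that] unfolding kf_def hf_def by auto
        have bad: "real p * real_of_int (kf p) * real Y < real_of_int q * N powr (4/3)" if "p \<in> P" for p
          using nex khf[OF that] that by force
        define X where "X = nat \<lfloor>real_of_int q * N powr (4/3) / real Y\<rfloor>"
        define R where "R = real_of_int q / real Y"
        define S where "S = {n\<in>{1..X}. \<exists>h::int. \<bar>of_int (a * int n - h*q)\<bar> < R}"
        define g where "g p = p * nat (kf p)" for p
        have gS: "g ` P \<subseteq> S"
        proof
          fix n assume "n \<in> g ` P"
          then obtain p where pP: "p \<in> P" and n: "n = g p" by auto
          have pp: "p > 0" using pP unfolding P_def by (auto simp: prime_gt_0_nat)
          have kk: "kf p > 0" using khf[OF pP] by simp
          have nr: "real n = real p * real_of_int (kf p)" unfolding n g_def using kk by simp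
          have n1: "n \<ge> 1" unfolding n g_def using kk pp by simp
          have "real n < real_of_int q * N powr (4/3) / real Y"
            using bad[OF pP] Ypos' nr by (simp add: field_simps)
          hence nX: "n \<le> X" unfolding X_def by linarith
          have "\<bar>of_int (a * int n - hf p * q)\<bar> = real_of_int q * \<bar>of_int (kf p) * \<theta> p - of_int (hf p)\<bar>"
          proof -
            have "of_int (a * int n - hf p * q) = real_of_int q * (of_int (kf p) * \<theta> p - of_int (hf p))"
              using qpos nr unfolding \<theta>_def by (simp add: field_simps)
            thus ?thesis using qpos by (simp add: abs_mult)
          qed
          also have "\<dots> < real_of_int q * (1 / real Y)" using khf(3)[OF pP] qpos by (intro mult_strict_left_mono) auto
          finally have "\<bar>of_int (a * int n - hf p * q)\<bar> < R" unfolding R_def by simp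
          thus "n \<in> S" unfolding S_def using n1 nX by auto
        qed
        have ginj: "inj_on g P"
        proof
          fix p p' assume pP: "p \<in> P" and pP': "p' \<in> P" and eq: "g p = g p'"
          show "p = p'"
          proof (rule ccontr)
            assume ne: "p \<noteq> p'"
            have pr: "prime p" "prime p'" using pP pP' unfolding P_def by auto
            have "p dvd p' * nat (kf p')" using eq unfolding g_def by (metis dvd_triv_left)
            moreover have "\<not> p dvd p'" using pr ne by (metis primes_dvd_imp_eq)
            ultimately have "p dvd nat (kf p')" using pr(1) prime_dvd_mult_iff by blast
            moreover have "nat (kf p') > 0" using khf(1)[OF pP'] by simp
            ultimately have "p \<le> nat (kf p')" by (simp add: dvd_imp_le)
            moreover have "nat (kf p') \<le> Y" using khf(2)[OF pP'] by simp
            moreover have "Y < p" using pP unfolding P_def by simp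
            ultimately show False by simp
          qed
        qed
        have "card P = card (g ` P)" using ginj by (simp add: card_image)
        also have "\<dots> \<le> card S" using gS by (intro card_mono) (auto simp: S_def)
        finally have cPS: "card P \<le> card S" .
        have copq: "coprime a q" using cop by (simp add: coprime_iff_gcd_eq_1)
        have "real (card S) \<le> (real X / of_int q + 1) * (2*R + 1)"
          by (rule count_small_residues[OF q1[unfolded int_one_le_iff_zero_less] _ copq])
             (use qpos Ypos' in \<open>auto simp: S_def R_def\<close>)
        also have "\<dots> \<le> (N powr (5/12) + 1) * (2 * N powr (5/12) + 1)"
        proof (intro mult_mono)
          have key: "N powr (4/3) / real Y \<le> N powr (5/12)"
          proof -
            have "N powr (4/3) / real Y \<le> N powr (4/3) / N powr (11/12)"
              using Ylow Npos Ypos' by (intro divide_left_mono) auto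
            also have "\<dots> = N powr (5/12)" by (simp add: powr_diff[symmetric])
            finally show ?thesis .
          qed
          have "real X \<le> real_of_int q * N powr (4/3) / real Y" unfolding X_def
            using qpos Ypos' by (simp add: divide_nonneg_nonneg)
          hence "real X / of_int q \<le> N powr (4/3) / real Y" using qpos by (simp add: field_simps)
          thus "real X / of_int q + 1 \<le> N powr (5/12) + 1" using key by linarith
          have "R \<le> N powr (4/3) / real Y" unfolding R_def using qN Ypos' by (intro divide_right_mono) auto
          thus "2 * R + 1 \<le> 2 * N powr (5/12) + 1" using key by linarith
        qed (use qpos Ypos' in \<open>auto simp: R_def\<close>)
        finally have up: "real (card P) \<le> (N powr (5/12) + 1) * (2 * N powr (5/12) + 1)"
          using cPS by linarith
        have "{p. prime p \<and> p \<le> Nn} \<subseteq> P \<union> {..Y}" unfolding P_def by auto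
        hence "card {p. prime p \<and> p \<le> Nn} \<le> card (P \<union> {..Y})" by (intro card_mono) (auto simp: P_def)
        also have "\<dots> \<le> card P + card {..Y}" by (rule card_Un_le)
        finally have "real (card {p. prime p \<and> p \<le> Nn}) \<le> real (card P) + real Y + 1" by simp
        moreover have "(N-2)/2 * ln 4 / ln N - 1 \<le> real (card {p. prime p \<and> p \<le> Nn})"
          unfolding Nn_def by (rule pi_lower[OF N4])
        ultimately show False using N0[OF NN0] up Yhigh by linarith
      qed
      then obtain p k h where pP: "p \<in> P" and k0: "0 < k" and kY: "k \<le> int Y"
        and kh: "\<bar>of_int k * \<theta> p - of_int h\<bar> < 1 / real Y"
        and big: "real p * real_of_int k * real Y \<ge> real_of_int q * N powr (4/3)" by blast
      have pr: "prime p" and Yp: "Y < p" and pN: "p \<le> Nn" using pP unfolding P_def by auto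
      have pNr: "real p \<le> N" using pN N1' unfolding Nn_def by linarith
      have kp: "k < int p" using kY Yp by linarith
      have "coprime (int p) k"
      proof -
        have "\<not> int p dvd k" using k0 kp by (meson zdvd_imp_le not_le)
        moreover have "prime (int p)" using pr by simp
        ultimately show ?thesis by (simp add: prime_imp_coprime)
      qed
      hence "gcd (int p) k = 1" by simp
      then obtain u v where uv: "u * int p + v * k = 1" using bezout_int[of "int p" k] by auto
      have ppos: "real p > 0" using pr prime_gt_0_nat by simp
      have kpos: "real_of_int k > 0" using k0 by simp
      have sumeq: "real_of_int (h * v) / real p + real_of_int (h * u) / real_of_int k = real_of_int h / (real p * real_of_int k)"
      proof -
        have "real_of_int u * real p + real_of_int v * real_of_int k = 1"
          using arg_cong[OF uv, of real_of_int] by simp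
        thus ?thesis using ppos kpos by (simp add: field_simps) (metis distrib_left mult.commute mult.right_neutral)
      qed
      have "\<bar>real_of_int a / real_of_int q - real_of_int h / (real p * real_of_int k)\<bar>
            = \<bar>of_int k * \<theta> p - of_int h\<bar> / (real p * real_of_int k)"
      proof -
        have "real_of_int a / real_of_int q - real_of_int h / (real p * real_of_int k)
            = (of_int k * \<theta> p - of_int h) / (real p * real_of_int k)"
          unfolding \<theta>_def using ppos kpos qpos by (simp add: field_simps)
        thus ?thesis using ppos kpos by simp
      qed
      also have "\<dots> \<le> (1 / real Y) / (real p * real_of_int k)"
        using kh ppos kpos by (intro divide_right_mono) auto
      also have "\<dots> = 1 / (real p * real_of_int k * real Y)" by simp
      also have "\<dots> \<le> 1 / (real_of_int q * N powr (4/3))"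
        using big qpos Npos ppos kpos Ypos' by (intro divide_left_mono) auto
      finally have e2: "\<bar>real_of_int a / real_of_int q - real_of_int h / (real p * real_of_int k)\<bar>
                       \<le> 1 / (real_of_int q * N powr (4/3))" .
      have "\<bar>\<alpha> - real_of_int (h * v) / real_of_int (int p) - real_of_int (h * u) / real_of_int k\<bar>
            = \<bar>\<alpha> - real_of_int h / (real p * real_of_int k)\<bar>" using sumeq by (simp only: diff_diff_eq of_int_of_nat_eq)
      also have "\<dots> \<le> 1 / (real_of_int q * N powr (4/3)) + 1 / (real_of_int q * N powr (4/3))"
        using app e2 by argo
      also have "\<dots> = 2 / (real_of_int q * N powr (4/3))" by simp
      also have "\<dots> \<le> C / (real_of_int q * N powr (4/3 - \<epsilon>))"
        using Dpos Dle by (intro frac_le) (auto simp: C_def)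
      finally have fin: "\<bar>\<alpha> - real_of_int (h * v) / real_of_int (int p) - real_of_int (h * u) / real_of_int k\<bar>
          \<le> C / (real_of_int q * N powr (4/3 - \<epsilon>))" .
      have "real_of_int k \<le> N" using kp pNr by linarith
      thus ?thesis using fin pr k0 pNr prime_gt_0_nat[OF pr]
        by (intro exI[of _ "h * v"] exI[of _ "h * u"] exI[of _ "int p"] exI[of _ k]) auto
    qed
  qed
qed

end
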